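(* Let $\Lambda\subset\mathbb Z^{2n+1}$ be a subgroup of rank at most $n-1$ with basis matrix $M(\Lambda)=(A\,|\,B\,|\,c)$, and let $V(\Lambda)$ be the associated variety of gluing equation type. Suppose $d=(d_1,\ldots,d_n)$ is a degeneration vector that is totally positive, i.e. $d_i>0$ for all $i$. If $A$ has rank $n-1$, then $d$ is genuine.
   Context: Let $\mathbb C^{*\bullet}=\mathbb C\setminus\{0,1\}$. For a subgroup $\Lambda\subset\mathbb Z^{2n+1}$, $V(\Lambda)\subset(\mathbb C^{*\bullet})^n$ is the set of points $(z_1,\ldots,z_n)$ with $z_1^{a_1}\cdots z_n^{a_n}(1-z_1)^{b_1}\cdots(1-z_n)^{b_n}=(-1)^c$ for all $(a_1,\ldots,a_n,b_1,\ldots,b_n,c)\in\Lambda$; when $\mathrm{rank}\,\Lambda\le n-1$ it is called a variety of gluing equation type. $M(\Lambda)$ is a matrix whose rows form a $\mathbb Z$-basis of $\Lambda$, written as $(A|B|c)$ with $A,B$ of size $r\times n$ and $c$ a column. Let $\overline V$ be the closure of $V(\Lambda)$ in $(\mathbb C\setminus\{1\})^n$; points of $\overline V\setminus V$ are ideal points. A degeneration vector is a nonzero $d\in\ker(A)\cap(\mathbb Z_{\ge0})^n$. It is genuine if there is an ideal point $p$ and a holomorphic map $f$ from the open unit disc, $f:(\mathbb D,0)\to(\overline V,p)$ with $f(\mathbb D\setminus\{0\})\subset V(\Lambda)$, whose coordinates have the form $z_i=t^{d_i}u_i(t)$ with $u_i$ holomorphic, $u_i(0)\ne0$, and $u_i(0)\neq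 1$ whenever $d_i=0$. *)

theory Defs
  imports "HOL-Analysis.Analysis" "Jordan_Normal_Form.DL_Rank"
begin

text \<open>Conventions. n is the number of variables; the basis matrix M(Lambda) = (A|B|c) has r rows
  and is given entrywise: A j i, B j i (row j < r, column i < n) and c j.
  An element of Z^(2n+1) is a triple (a, b, gamma) with a, b :: nat => int (only i < n matters).\<close>

definition lattice_of ::
  "nat \<Rightarrow> nat \<Rightarrow> (nat \<Rightarrow> nat \<Rightarrow> int) \<Rightarrow> (nat \<Rightarrow> nat \<Rightarrow> int) \<Rightarrow> (nat \<Rightarrow> int)
     \<Rightarrow> ((nat \<Rightarrow> int) \<times> (nat \<Rightarrow> int) \<times> int) set" where
  "lattice_of n r A B c =
     {(a, b, g) | a b g. \<exists>k :: nat \<Rightarrow> int.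
        (\<forall>i. a i = (if i < n then (\<Sum>j<r. k j * A j i) else 0)) \<and>
        (\<forall>i. b i = (if i < n then (\<Sum>j<r. k j * B j i) else 0)) \<and>
        g = (\<Sum>j<r. k j * c j)}"

definition rows_independent ::
  "nat \<Rightarrow> nat \<Rightarrow> (nat \<Rightarrow> nat \<Rightarrow> int) \<Rightarrow> (nat \<Rightarrow> nat \<Rightarrow> int) \<Rightarrow> (nat \<Rightarrow> int) \<Rightarrow> bool" where
  "rows_independent n r A B c \<longleftrightarrow>
     (\<forall>k :: nat \<Rightarrow> int.
        (\<forall>i<n. (\<Sum>j<r. k j * A j i) = 0) \<and> (\<forall>i<n. (\<Sum>j<r. k j * B j i) = 0) \<and>
        (\<Sum>j<r. k j * c j) = 0 \<longrightarrow> (\<forall>j<r. k j = 0))"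

definition int_mat_rank :: "nat \<Rightarrow> nat \<Rightarrow> (nat \<Rightarrow> nat \<Rightarrow> int) \<Rightarrow> nat" where
  "int_mat_rank r n A = vec_space.rank r (mat r n (\<lambda>(j, i). rat_of_int (A j i)))"

definition Cstarbullet_pts :: "nat \<Rightarrow> (nat \<Rightarrow> complex) set" where
  "Cstarbullet_pts n = {z. (\<forall>i<n. z i \<noteq> 0 \<and> z i \<noteq> 1) \<and> (\<forall>i\<ge>n. z i = 0)}"

definition Vvar :: "nat \<Rightarrow> ((nat \<Rightarrow> int) \<times> (nat \<Rightarrow> int) \<times> int) set \<Rightarrow> (nat \<Rightarrow> complex) set" where
  "Vvar n \<Lambda> = {z \<in> Cstarbullet_pts n.
      \<forall>(a, b, g) \<in> \<Lambda>. (\<Prod>i<n. z i powi a i * (1 - z i) powi b i) = (-1) powi g}"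

text \<open>Closure of V in (C \ {1})^n (product topology, expressed with the sup-distance).\<close>
definition Vclosure :: "nat \<Rightarrow> ((nat \<Rightarrow> int) \<times> (nat \<Rightarrow> int) \<times> int) set \<Rightarrow> (nat \<Rightarrow> complex) set" where
  "Vclosure n \<Lambda> = {p. (\<forall>i<n. p i \<noteq> 1) \<and> (\<forall>i\<ge>n. p i = 0) \<and>
      (\<forall>e>0. \<exists>z\<in>Vvar n \<Lambda>. \<forall>i<n. norm (z i - p i) < e)}"

definition ideal_point :: "nat \<Rightarrow> ((nat \<Rightarrow> int) \<times> (nat \<Rightarrow> int) \<times> int) set \<Rightarrow> (nat \<Rightarrow> complex) \<Rightarrow> bool" where
  "ideal_point n \<Lambda> p \<longleftrightarrow> p \<in> Vclosure n \<Lambda> - Vvar n \<Lambda>"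

definition degeneration_vector :: "nat \<Rightarrow> nat \<Rightarrow> (nat \<Rightarrow> nat \<Rightarrow> int) \<Rightarrow> (nat \<Rightarrow> int) \<Rightarrow> bool" where
  "degeneration_vector n r A d \<longleftrightarrow>
     (\<forall>i<n. d i \<ge> 0) \<and> (\<exists>i<n. d i \<noteq> 0) \<and> (\<forall>j<r. (\<Sum>i<n. A j i * d i) = 0)"

definition genuine :: "nat \<Rightarrow> ((nat \<Rightarrow> int) \<times> (nat \<Rightarrow> int) \<times> int) set \<Rightarrow> (nat \<Rightarrow> int) \<Rightarrow> bool" where
  "genuine n \<Lambda> d \<longleftrightarrow>
     (\<exists>p f u. ideal_point n \<Lambda> p \<and>
        (\<forall>i<n. f i holomorphic_on ball 0 1) \<and>
        (\<forall>i<n. f i 0 = p i) \<and>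
        (\<forall>t\<in>ball 0 1. (\<lambda>i. if i < n then f i t else 0) \<in> Vclosure n \<Lambda>) \<and>
        (\<forall>t\<in>ball 0 1 - {0}. (\<lambda>i. if i < n then f i t else 0) \<in> Vvar n \<Lambda>) \<and>
        (\<forall>i<n. u i holomorphic_on ball 0 1 \<and> u i 0 \<noteq> 0 \<and> (d i = 0 \<longrightarrow> u i 0 \<noteq> 1) \<and>
               (\<forall>t\<in>ball 0 1. f i t = t ^ nat (d i) * u i t)))"

end

theory Submission
  imports Defs
begin


lemma right_inverse_exists:
  fixes A :: "nat \<Rightarrow> nat \<Rightarrow> int"
  assumes rk: "int_mat_rank r n A \<ge> r" and j: "j < r"
  shows "\<exists>y :: nat \<Rightarrow> rat. \<forall>j'<r. (\<Sum>i<n. rat_of_int (A j' i) * y i) = (if j' = j then 1 else 0)"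
proof -
  define M where "M = mat r n (\<lambda>(j, i). rat_of_int (A j i))"
  have Mc: "M \<in> carrier_mat r n" unfolding M_def by simp
  interpret V: vec_space "TYPE(rat)" r .
  let ?P = "\<lambda>T. T \<subseteq> set (cols M) \<and> V.lin_indpt T"
  obtain S where fS: "finite S" and mS: "maximal S ?P"
    using maximal_exists[of ?P "card (set (cols M))" "{}"]
    by (meson List.finite_set card_mono empty_subsetI rev_finite_subset V.finite_lin_indpt2 empty_iff)
  have rkS: "V.rank M = card S" using V.rank_card_indpt[OF Mc mS] .
  have colsC: "set (cols M) \<subseteq> carrier_vec r" using Mc cols_dim by blast
  have SP: "?P S" using mS unfolding maximal_def by blast
  hence Sc: "S \<subseteq> carrier_vec r" using colsC by blast
  have "card S \<ge> r" using rk rkS unfolding int_mat_rank_def M_def by simp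
  hence "card S \<ge> V.dim" using V.dim_is_n by simp
  hence bas: "V.basis S" using V.dim_li_is_basis[OF V.fin_dim fS] Sc SP by auto
  have "unit_vec r j \<in> V.span S" using bas j unfolding V.basis_def by auto
  then obtain a where ua: "unit_vec r j = V.lincomb a S"
    using V.finite_span[OF fS] Sc by auto
  define idx where "idx v = (SOME i. i < n \<and> col M i = v)" for v
  have idx: "idx v < n \<and> col M (idx v) = v" if "v \<in> S" for v
  proof -
    have "v \<in> set (cols M)" using that SP by blast
    then obtain i where "i < n" "col M i = v" using Mc by (auto simp: cols_def)
    thus ?thesis unfolding idx_def by (metis (mono_tags, lifting) someI)
  qed
  define y where "y i = (\<Sum>v\<in>S. if idx v = i then a v else 0)" for i
  show ?thesis
  proof (intro exI allI impI)
    fix j' assume j': "j' < r"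
    have "(\<Sum>i<n. rat_of_int (A j' i) * y i) = (\<Sum>i<n. \<Sum>v\<in>S. if idx v = i then a v * rat_of_int (A j' i) else 0)"
      unfolding y_def sum_distrib_left by (intro sum.cong refl) (auto simp: mult.commute)
    also have "\<dots> = (\<Sum>v\<in>S. \<Sum>i<n. if idx v = i then a v * rat_of_int (A j' i) else 0)"
      by (rule sum.swap)
    also have "\<dots> = (\<Sum>v\<in>S. a v * v $ j')"
    proof (intro sum.cong refl)
      fix v assume v: "v \<in> S"
      have "(\<Sum>i<n. if idx v = i then a v * rat_of_int (A j' i) else 0) = a v * rat_of_int (A j' (idx v))"
        using idx[OF v] by (simp add: sum.delta)
      also have "rat_of_int (A j' (idx v)) = col M (idx v) $ j'"
        using idx[OF v, THEN conjunct1] j' unfolding M_def by simp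
      finally show "(\<Sum>i<n. if idx v = i then a v * rat_of_int (A j' i) else 0) = a v * v $ j'"
        using idx[OF v] by simp
    qed
    also have "\<dots> = V.lincomb a S $ j'" using V.lincomb_index[OF j' Sc] by simp
    also have "\<dots> = (if j' = j then 1 else 0)" using ua[symmetric] j j' by simp
    finally show "(\<Sum>i<n. rat_of_int (A j' i) * y i) = (if j' = j then 1 else 0)" .
  qed
qed


definition vd :: "nat \<Rightarrow> (nat \<Rightarrow> complex) \<Rightarrow> (nat \<Rightarrow> complex) \<Rightarrow> real" where
  "vd n a b = (\<Sum>i<n. cmod (a i - b i))"

lemma vd_ge0: "vd n a b \<ge> 0" unfolding vd_def by (simp add: sum_nonneg)

lemma vd_comp: "i < n \<Longrightarrow> cmod (a i - b i) \<le> vd n a b"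
  unfolding vd_def by (rule member_le_sum) auto

lemma vd_tri: "vd n a b \<le> vd n a c + vd n c b"
  unfolding vd_def sum.distrib[symmetric]
  by (rule sum_mono) (metis diff_add_cancel norm_triangle_ineq add_diff_eq diff_add_eq_diff_diff_swap
      diff_diff_eq2)

lemma vd_sym: "vd n a b = vd n b a"
  unfolding vd_def by (intro sum.cong refl) (simp add: norm_minus_commute)

lemma vd_zero: "vd n a b = 0 \<Longrightarrow> i < n \<Longrightarrow> a i = b i"
  using vd_comp[of i n a b] vd_ge0[of n a b] by simp

lemma contraction_fix:
  fixes T :: "(nat \<Rightarrow> complex) \<Rightarrow> nat \<Rightarrow> complex" and c :: "nat \<Rightarrow> complex"
  assumes into: "\<And>x. vd n x c \<le> R \<Longrightarrow> vd n (T x) c \<le> R"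
    and contr: "\<And>x y. vd n x c \<le> R \<Longrightarrow> vd n y c \<le> R \<Longrightarrow> vd n (T x) (T y) \<le> q * vd n x y"
    and q: "0 \<le> q" "q < 1" and R: "0 \<le> R"
  shows "\<exists>x. vd n x c \<le> R \<and> (\<forall>i<n. T x i = x i)"
proof -
  define s where "s k = (T ^^ k) c" for k
  have sS: "s (Suc k) = T (s k)" for k unfolding s_def by simp
  have ball: "vd n (s k) c \<le> R" for k
  proof (induction k)
    case 0 show ?case using R by (simp add: s_def vd_def)
  next
    case (Suc k) show ?case unfolding sS by (rule into[OF Suc.IH])
  qed
  define D0 where "D0 = vd n (s 1) (s 0)"
  have Dk: "vd n (s (Suc k)) (s k) \<le> q ^ k * D0" for k
  proof (induction k)
    case 0 show ?case by (simp add: D0_def)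
  next
    case (Suc k)
    have "vd n (s (Suc (Suc k))) (s (Suc k)) \<le> q * vd n (s (Suc k)) (s k)"
      unfolding sS by (rule contr[OF ball[of "Suc k", unfolded sS] ball])
    also have "\<dots> \<le> q * (q ^ k * D0)" by (intro mult_left_mono Suc.IH q)
    finally show ?case by (simp add: mult.assoc)
  qed
  have conv: "convergent (\<lambda>k. s k i)" if i: "i < n" for i
  proof -
    have "summable (\<lambda>k. s (Suc k) i - s k i)"
    proof (rule summable_comparison_test)
      show "\<exists>N. \<forall>k\<ge>N. norm (s (Suc k) i - s k i) \<le> D0 * q ^ k"
        using vd_comp[OF i, of "s (Suc _)" "s _"] Dk by (metis mult.commute order_trans)
      show "summable (\<lambda>k. D0 * q ^ k)" using q by (intro summable_mult summable_geometric) auto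
    qed
    then obtain l where "(\<lambda>m. \<Sum>k<m. s (Suc k) i - s k i) \<longlonglongrightarrow> l"
      by (auto simp: summable_iff_convergent convergent_def)
    hence "(\<lambda>m. s 0 i + (\<Sum>k<m. s (Suc k) i - s k i)) \<longlonglongrightarrow> s 0 i + l"
      by (intro tendsto_add tendsto_const)
    moreover have "s 0 i + (\<Sum>k<m. s (Suc k) i - s k i) = s m i" for m
      by (induction m) (auto simp: algebra_simps)
    ultimately show ?thesis unfolding convergent_def by auto
  qed
  define x where "x i = lim (\<lambda>k. s k i)" for i
  have lim_i: "(\<lambda>k. s k i) \<longlonglongrightarrow> x i" if "i < n" for i
    using conv[OF that] unfolding x_def by (simp add: convergent_LIMSEQ_iff)
  have vlim: "(\<lambda>k. vd n (s k) x) \<longlonglongrightarrow> 0"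
  proof -
    have "(\<lambda>k. \<Sum>i<n. cmod (s k i - x i)) \<longlonglongrightarrow> (\<Sum>i<n. cmod (x i - x i))"
      by (intro tendsto_sum tendsto_norm tendsto_diff lim_i tendsto_const) auto
    thus ?thesis by (simp add: vd_def)
  qed
  have xb: "vd n x c \<le> R"
  proof -
    have "(\<lambda>k. vd n (s k) c) \<longlonglongrightarrow> vd n x c"
      unfolding vd_def by (intro tendsto_sum tendsto_norm tendsto_diff lim_i tendsto_const) auto
    thus ?thesis using ball by (intro LIMSEQ_le_const2) auto
  qed
  have L: "(\<lambda>k. q * vd n (s k) x + vd n (s (Suc k)) x) \<longlonglongrightarrow> 0"
      using tendsto_add[OF tendsto_mult[OF tendsto_const vlim, of q] LIMSEQ_Suc[OF vlim]] by simp
  have E: "\<forall>\<^sub>F k in sequentially. vd n (T x) x \<le> q * vd n (s k) x + vd n (s (Suc k)) x"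
    proof (intro always_eventually allI)
      fix k
      have 1: "vd n (T x) x \<le> vd n (T x) (s (Suc k)) + vd n (s (Suc k)) x" by (rule vd_tri)
      have 2: "vd n (T x) (s (Suc k)) \<le> q * vd n x (s k)" unfolding sS by (rule contr[OF xb ball])
      have 3: "vd n x (s k) = vd n (s k) x" by (rule vd_sym)
      show "vd n (T x) x \<le> q * vd n (s k) x + vd n (s (Suc k)) x" using 1 2[unfolded 3] by linarith
    qed
  have "vd n (T x) x \<le> 0"
    by (rule tendsto_le[OF trivial_limit_sequentially L tendsto_const E])
  hence "vd n (T x) x = 0" using vd_ge0[of n "T x" x] by simp
  hence "\<forall>i<n. T x i = x i" using vd_zero by fastforce
  thus ?thesis using xb by blast
qed


lemma not_nonpos_1m: "cmod w \<le> 1/2 \<Longrightarrow> 1 - w \<notin> \<real>\<^sub>\<le>\<^sub>0"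
proof
  assume "cmod w \<le> 1/2" "1 - w \<in> \<real>\<^sub>\<le>\<^sub>0"
  hence "Re (1 - w) \<le> 0" by (simp add: complex_nonpos_Reals_iff)
  moreover have "Re w \<le> 1/2" using abs_Re_le_cmod[of w] \<open>cmod w \<le> 1/2\<close> by linarith
  ultimately show False by simp
qed

lemma norm_1m_ge: "cmod w \<le> 1/2 \<Longrightarrow> cmod (1 - w) \<ge> 1/2"
  using norm_triangle_ineq2[of 1 w] by simp

lemma ln_lip:
  assumes "cmod w \<le> 1/2" "cmod w' \<le> 1/2"
  shows "cmod (Ln (1 - w) - Ln (1 - w')) \<le> 2 * cmod (w - w')"
proof (rule field_differentiable_bound[where S = "cball 0 (1/2)" and f = "\<lambda>w. Ln (1 - w)"
        and f' = "\<lambda>w. - inverse (1 - w)"])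
  fix z assume z: "z \<in> cball (0::complex) (1/2)"
  hence zz: "cmod z \<le> 1/2" by simp
  show "((\<lambda>w. Ln (1 - w)) has_field_derivative - inverse (1 - z)) (at z within cball 0 (1/2))"
    using not_nonpos_1m[OF zz]
    by (auto intro!: derivative_eq_intros)
  have "cmod (1 - z) \<ge> 1/2" using norm_1m_ge[OF zz] .
  hence "inverse (cmod (1 - z)) \<le> inverse (1/2)" by (intro le_imp_inverse_le) auto
  thus "cmod (- inverse (1 - z)) \<le> 2" by (simp add: norm_inverse)
qed (use assms in auto)

lemma ln_bound: "cmod w \<le> 1/2 \<Longrightarrow> cmod (Ln (1 - w)) \<le> 2 * cmod w"
  using ln_lip[of w 0] by simp

lemma exp_lip:
  assumes "dist c x \<le> 1" "dist c y \<le> 1"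
  shows "cmod (exp x - exp y) \<le> exp (cmod c + 1) * cmod (x - y)"
proof (rule field_differentiable_bound[where S = "cball c 1" and f = exp and f' = exp])
  fix z assume z: "z \<in> cball c 1"
  show "(exp has_field_derivative exp z) (at z within cball c 1)"
    by (auto intro!: derivative_eq_intros)
  have "cmod z \<le> cmod c + 1" using z norm_triangle_ineq2[of z c] by (auto simp: dist_norm norm_minus_commute)
  hence "Re z \<le> cmod c + 1" using abs_Re_le_cmod[of z] by linarith
  thus "cmod (exp z) \<le> exp (cmod c + 1)" by (simp add: norm_exp_eq_Re)
qed (use assms in auto)

lemma exp_bound:
  assumes "dist c x \<le> 1"
  shows "cmod (exp x) \<le> exp (cmod c + 1)"
proof -
  have "cmod x \<le> cmod c + 1" using assms norm_triangle_ineq2[of x c] by (auto simp: dist_norm norm_minus_commute)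
  hence "Re x \<le> cmod c + 1" using abs_Re_le_cmod[of x] by linarith
  thus ?thesis by (simp add: norm_exp_eq_Re)
qed


lemma mat_bound:
  fixes M :: "nat \<Rightarrow> nat \<Rightarrow> complex"
  shows "(\<Sum>i<n. cmod (\<Sum>k<n. M i k * w k)) \<le> (1 + (\<Sum>i<n. \<Sum>k<n. cmod (M i k))) * (\<Sum>k<n. cmod (w k))"
proof -
  define S where "S = (\<Sum>k<n. cmod (w k))"
  have S0: "S \<ge> 0" unfolding S_def by (simp add: sum_nonneg)
  have "(\<Sum>i<n. cmod (\<Sum>k<n. M i k * w k)) \<le> (\<Sum>i<n. \<Sum>k<n. cmod (M i k) * S)"
  proof (intro sum_mono)
    fix i
    have "cmod (\<Sum>k<n. M i k * w k) \<le> (\<Sum>k<n. cmod (M i k * w k))" by (rule norm_sum)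
    also have "\<dots> \<le> (\<Sum>k<n. cmod (M i k) * S)"
    proof (intro sum_mono)
      fix k assume "k \<in> {..<n}"
      hence "cmod (w k) \<le> S" unfolding S_def by (intro member_le_sum) auto
      thus "cmod (M i k * w k) \<le> cmod (M i k) * S" by (simp add: norm_mult mult_left_mono)
    qed
    finally show "cmod (\<Sum>k<n. M i k * w k) \<le> (\<Sum>k<n. cmod (M i k) * S)" .
  qed
  also have "\<dots> = (\<Sum>i<n. \<Sum>k<n. cmod (M i k)) * S" by (simp add: sum_distrib_right)
  also have "\<dots> \<le> (1 + (\<Sum>i<n. \<Sum>k<n. cmod (M i k))) * S" using S0 by (simp add: algebra_simps)
  finally show ?thesis unfolding S_def .
qed

lemma rho_arith:
  fixes K E N :: real assumes K: "K \<ge> 1" and E: "E \<ge> 1" and N: "N \<ge> 0"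
  shows "1/(8*K*E*(N+1)) * E \<le> 1/8" "2 * K * (1/(8*K*E*(N+1))) * E * N \<le> 1/4"
        "2 * K * (1/(8*K*E*(N+1))) * E \<le> 1/4"
proof -
  have P: "K * E * (N+1) > 0" using K E N by (simp add: add_pos_nonneg)
  have e1: "1/(8*K*E*(N+1)) * E = 1 / (8*K*(N+1))"
  proof -
    have "1/(8*K*E*(N+1)) * E = E / (E * (8*K*(N+1)))" by (simp add: ac_simps)
    also have "\<dots> = 1 / (8*K*(N+1))" using E by simp
    finally show ?thesis .
  qed
  have e2: "2 * K * (1/(8*K*E*(N+1))) * E = 2/(8*(N+1))"
  proof -
    have "2 * K * (1/(8*K*E*(N+1))) * E = (K * E) * 2 / ((K * E) * (8*(N+1)))" by (simp add: ac_simps)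
    also have "\<dots> = 2/(8*(N+1))" using E K by simp
    finally show ?thesis .
  qed
  have "8*K*(N+1) \<ge> 8" using K N by (smt (verit) mult_le_cancel_left1 mult_mono)
  thus "1/(8*K*E*(N+1)) * E \<le> 1/8" unfolding e1 by (simp add: divide_simps)
  show "2 * K * (1/(8*K*E*(N+1))) * E * N \<le> 1/4" unfolding e2 using N by (simp add: divide_simps)
  show "2 * K * (1/(8*K*E*(N+1))) * E \<le> 1/4" unfolding e2 using N by (simp add: divide_simps)
qed

locale gsetup =
  fixes n :: nat and M :: "nat \<Rightarrow> nat \<Rightarrow> complex" and x0 :: "nat \<Rightarrow> complex" and d :: "nat \<Rightarrow> nat"
  assumes d_pos: "\<And>k. k < n \<Longrightarrow> d k \<ge> 1"
begin

definition G :: "nat \<Rightarrow> complex \<Rightarrow> complex \<Rightarrow> complex" where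
  "G k t y = Ln (1 - t ^ d k * exp y)"

definition K :: real where "K = 1 + (\<Sum>i<n. \<Sum>k<n. cmod (M i k))"
definition E :: real where "E = exp (vd n x0 (\<lambda>_. 0) + 1)"
definition \<rho> :: real where "\<rho> = 1 / (8 * K * E * (real n + 1))"
definition T :: "complex \<Rightarrow> (nat \<Rightarrow> complex) \<Rightarrow> nat \<Rightarrow> complex" where
  "T t x = (\<lambda>i. x0 i - (\<Sum>k<n. M i k * G k t (x k)))"

lemma K_ge1: "K \<ge> 1" unfolding K_def by (simp add: sum_nonneg)
lemma E_ge1: "E \<ge> 1" unfolding E_def using vd_ge0[of n x0 "\<lambda>_. 0"] by simp
lemma rho_pos: "\<rho> > 0" unfolding \<rho>_def using K_ge1 E_ge1 by simp

lemma rho_facts: "\<rho> * E \<le> 1/8" "2 * K * \<rho> * E * n \<le> 1/4" "2 * K * \<rho> * E \<le> 1/4" "\<rho> \<le> 1"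
proof -
  note r = rho_arith[OF K_ge1 E_ge1, of "real n", folded \<rho>_def]
  show "\<rho> * E \<le> 1/8" "2 * K * \<rho> * E * n \<le> 1/4" "2 * K * \<rho> * E \<le> 1/4"
    using r by auto
  have "\<rho> * 1 \<le> \<rho> * E" using rho_pos E_ge1 by (intro mult_left_mono) auto
  thus "\<rho> \<le> 1" using \<open>\<rho> * E \<le> 1/8\<close> by linarith
qed

lemma x0_bound: "k < n \<Longrightarrow> exp (cmod (x0 k) + 1) \<le> E"
  unfolding E_def using vd_comp[of k n x0 "\<lambda>_. 0"] by simp

lemma W_bound:
  assumes k: "k < n" and t: "cmod t \<le> \<rho>" and y: "dist (x0 k) y \<le> 1"
  shows "cmod (t ^ d k * exp y) \<le> \<rho> * E" "cmod (t ^ d k * exp y) \<le> 1/2"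
proof -
  have "cmod t ^ d k \<le> cmod t ^ 1"
    using t rho_facts(4) d_pos[OF k] by (intro power_decreasing) auto
  hence tp: "cmod (t ^ d k) \<le> \<rho>" using t by (simp add: norm_power)
  have ey: "cmod (exp y) \<le> E" using exp_bound[OF y] x0_bound[OF k] by linarith
  show "cmod (t ^ d k * exp y) \<le> \<rho> * E" unfolding norm_mult
    using tp ey rho_pos by (intro mult_mono) auto
  thus "cmod (t ^ d k * exp y) \<le> 1/2" using rho_facts(1) by linarith
qed

lemma tpow_bound:
  assumes k: "k < n" and t: "cmod t \<le> \<rho>"
  shows "cmod (t ^ d k) \<le> \<rho>"
proof -
  have "cmod t ^ d k \<le> cmod t ^ 1"
    using t rho_facts(4) d_pos[OF k] by (intro power_decreasing) auto
  thus ?thesis using t by (simp add: norm_power)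
qed

lemma G_bound:
  assumes k: "k < n" and t: "cmod t \<le> \<rho>" and y: "dist (x0 k) y \<le> 1"
  shows "cmod (G k t y) \<le> 2 * \<rho> * E"
  using ln_bound[OF W_bound(2)[OF k t y]] W_bound(1)[OF k t y] unfolding G_def by linarith

lemma G_lip:
  assumes k: "k < n" and t: "cmod t \<le> \<rho>" and y: "dist (x0 k) y \<le> 1" and y': "dist (x0 k) y' \<le> 1"
  shows "cmod (G k t y - G k t y') \<le> 2 * \<rho> * E * cmod (y - y')"
proof -
  have "cmod (G k t y - G k t y') \<le> 2 * cmod (t ^ d k * exp y - t ^ d k * exp y')"
    unfolding G_def by (rule ln_lip[OF W_bound(2)[OF k t y] W_bound(2)[OF k t y']])
  also have "cmod (t ^ d k * exp y - t ^ d k * exp y') = cmod (t ^ d k) * cmod (exp y - exp y')"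
    by (simp add: norm_mult[symmetric] right_diff_distrib)
  also have "\<dots> \<le> \<rho> * (E * cmod (y - y'))"
  proof (intro mult_mono tpow_bound[OF k t])
    show "cmod (exp y - exp y') \<le> E * cmod (y - y')"
      using exp_lip[OF y y'] x0_bound[OF k] by (meson mult_right_mono norm_ge_zero order_trans)
  qed (use rho_pos in auto)
  finally show ?thesis by (simp add: mult.assoc)
qed

lemma dom_comp: "vd n x x0 \<le> 1 \<Longrightarrow> k < n \<Longrightarrow> dist (x0 k) (x k) \<le> 1"
  using vd_comp[of k n x x0] by (simp add: dist_norm norm_minus_commute)

lemma T_into:
  assumes t: "cmod t \<le> \<rho>" and x: "vd n x x0 \<le> 1"
  shows "vd n (T t x) x0 \<le> 1"
proof -
  have "vd n (T t x) x0 = (\<Sum>i<n. cmod (\<Sum>k<n. M i k * G k t (x k)))"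
    unfolding vd_def T_def by (simp add: norm_minus_commute)
  also have "\<dots> \<le> K * (\<Sum>k<n. cmod (G k t (x k)))" unfolding K_def by (rule mat_bound)
  also have "\<dots> \<le> K * (\<Sum>k<n. 2 * \<rho> * E)"
    using K_ge1 G_bound[OF _ t dom_comp[OF x]] by (intro mult_left_mono sum_mono) auto
  also have "\<dots> = 2 * K * \<rho> * E * n" by simp
  also have "\<dots> \<le> 1" using rho_facts(2) by linarith
  finally show ?thesis .
qed

lemma T_contr:
  assumes t: "cmod t \<le> \<rho>" and x: "vd n x x0 \<le> 1" and y: "vd n y x0 \<le> 1"
  shows "vd n (T t x) (T t y) \<le> 1/4 * vd n x y"
proof -
  have "vd n (T t x) (T t y) = (\<Sum>i<n. cmod (\<Sum>k<n. M i k * (G k t (y k) - G k t (x k))))"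
    unfolding vd_def T_def by (simp add: sum_subtractf right_diff_distrib)
  also have "\<dots> \<le> K * (\<Sum>k<n. cmod (G k t (y k) - G k t (x k)))" unfolding K_def by (rule mat_bound)
  also have "\<dots> \<le> K * (\<Sum>k<n. 2 * \<rho> * E * cmod (x k - y k))"
    using K_ge1 G_lip[OF _ t dom_comp[OF y] dom_comp[OF x]]
    by (intro mult_left_mono sum_mono) (auto simp: norm_minus_commute)
  also have "\<dots> = 2 * K * \<rho> * E * vd n x y" by (simp add: vd_def sum_distrib_left algebra_simps)
  also have "\<dots> \<le> 1/4 * vd n x y" using rho_facts(3) vd_ge0 by (intro mult_right_mono) auto
  finally show ?thesis .
qed

definition X :: "complex \<Rightarrow> nat \<Rightarrow> complex" where
  "X t = (SOME x. vd n x x0 \<le> 1 \<and> (\<forall>i<n. T t x i = x i))"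

lemma X_prop:
  assumes t: "cmod t \<le> \<rho>"
  shows "vd n (X t) x0 \<le> 1" "\<And>i. i < n \<Longrightarrow> T t (X t) i = X t i"
proof -
  have "\<exists>x. vd n x x0 \<le> 1 \<and> (\<forall>i<n. T t x i = x i)"
    by (rule contraction_fix[where q = "1/4"]) (use T_into[OF t] T_contr[OF t] in auto)
  hence "vd n (X t) x0 \<le> 1 \<and> (\<forall>i<n. T t (X t) i = X t i)"
    unfolding X_def by (rule someI_ex)
  thus "vd n (X t) x0 \<le> 1" "\<And>i. i < n \<Longrightarrow> T t (X t) i = X t i" by auto
qed

lemma X_eq: "cmod t \<le> \<rho> \<Longrightarrow> i < n \<Longrightarrow> X t i = x0 i - (\<Sum>k<n. M i k * G k t (X t k))"
  using X_prop(2)[of t i] unfolding T_def by simp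

lemma X_cont_bound:
  assumes s: "cmod s \<le> \<rho>" and t: "cmod t \<le> \<rho>"
  shows "vd n (X s) (X t) \<le> 2 * K * (\<Sum>k<n. cmod (G k s (X t k) - G k t (X t k)))"
proof -
  have "vd n (X s) (X t) = vd n (T s (X s)) (T t (X t))"
    unfolding vd_def using X_prop(2)[OF s] X_prop(2)[OF t] by simp
  also have "\<dots> \<le> vd n (T s (X s)) (T s (X t)) + vd n (T s (X t)) (T t (X t))" by (rule vd_tri)
  also have "vd n (T s (X s)) (T s (X t)) \<le> 1/4 * vd n (X s) (X t)"
    by (rule T_contr[OF s X_prop(1)[OF s] X_prop(1)[OF t]])
  also have "vd n (T s (X t)) (T t (X t)) = (\<Sum>i<n. cmod (\<Sum>k<n. M i k * (G k t (X t k) - G k s (X t k))))"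
    unfolding vd_def T_def by (simp add: sum_subtractf right_diff_distrib)
  also have "\<dots> \<le> K * (\<Sum>k<n. cmod (G k t (X t k) - G k s (X t k)))" unfolding K_def by (rule mat_bound)
  finally have "vd n (X s) (X t) \<le> 1/4 * vd n (X s) (X t) + K * (\<Sum>k<n. cmod (G k s (X t k) - G k t (X t k)))"
    by (simp add: norm_minus_commute)
  moreover have "K * (\<Sum>k<n. cmod (G k s (X t k) - G k t (X t k))) \<ge> 0"
    using K_ge1 by (simp add: sum_nonneg)
  ultimately show ?thesis by linarith
qed

end


lemma phi_lip:
  fixes W1 W2 :: complex
  assumes "cmod W1 \<le> 1/2" "cmod W2 \<le> 1/2"
  shows "cmod (inverse (1 - W1) * (- W1) - inverse (1 - W2) * (- W2)) \<le> 4 * cmod (W1 - W2)"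
proof -
  have n1: "cmod (1 - W1) \<ge> 1/2" "cmod (1 - W2) \<ge> 1/2" using norm_1m_ge assms by auto
  hence nz: "1 - W1 \<noteq> 0" "1 - W2 \<noteq> 0" by auto
  have eq: "inverse (1 - W1) * (- W1) - inverse (1 - W2) * (- W2) = - (W1 - W2) / ((1 - W1) * (1 - W2))"
    using nz by (simp add: field_simps)
  have "cmod ((1 - W1) * (1 - W2)) \<ge> 1/4"
  proof -
    have "(1/2) * (1/2) \<le> cmod (1 - W1) * cmod (1 - W2)" using n1 by (intro mult_mono) auto
    thus ?thesis unfolding norm_mult by simp
  qed
  hence "cmod (W1 - W2) / cmod ((1 - W1) * (1 - W2)) \<le> cmod (W1 - W2) / (1/4)"
    by (intro divide_left_mono) auto
  thus ?thesis unfolding eq by (simp add: norm_divide norm_minus_commute mult.commute)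
qed

lemma phi_bound:
  fixes W :: complex
  assumes "cmod W \<le> 1/2"
  shows "cmod (inverse (1 - W) * (- W)) \<le> 2 * cmod W"
proof -
  have "cmod (1 - W) \<ge> 1/2" using norm_1m_ge assms by auto
  hence "inverse (cmod (1 - W)) \<le> inverse (1/2)" by (intro le_imp_inverse_le) auto
  hence "inverse (cmod (1 - W)) * cmod W \<le> 2 * cmod W" by (intro mult_right_mono) auto
  thus ?thesis by (simp add: norm_mult norm_inverse)
qed

context gsetup begin

definition DG :: "nat \<Rightarrow> complex \<Rightarrow> complex \<Rightarrow> complex" where
  "DG k s y = inverse (1 - s ^ d k * exp y) * (- (s ^ d k * exp y))"

lemma G_deriv_y:
  assumes "cmod (s ^ d k * exp y) \<le> 1/2"
  shows "((\<lambda>\<eta>. G k s \<eta>) has_field_derivative DG k s y) (at y within S)"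
  unfolding G_def DG_def using not_nonpos_1m[OF assms]
  by (auto intro!: derivative_eq_intros)

lemma G_diff_t:
  assumes "cmod (t ^ d k * exp y) \<le> 1/2"
  shows "(\<lambda>s. G k s y) field_differentiable (at t)"
  unfolding G_def field_differentiable_def using not_nonpos_1m[OF assms]
  by (intro exI) (auto intro!: derivative_eq_intros)

lemma G_cont_t:
  assumes "cmod (t ^ d k * exp y) \<le> 1/2"
  shows "isCont (\<lambda>s. G k s y) t"
  using G_diff_t[OF assms] field_differentiable_imp_continuous_at by blast

lemma X_cont:
  assumes t: "cmod t < \<rho>"
  shows "((\<lambda>s. vd n (X s) (X t)) \<longlongrightarrow> 0) (at t)"
proof (rule tendsto_sandwich[where f = "\<lambda>_. 0"])
  have tt: "cmod t \<le> \<rho>" using t by simp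
  show "\<forall>\<^sub>F s in at t. 0 \<le> vd n (X s) (X t)" by (simp add: vd_ge0)
  have "\<forall>\<^sub>F s in at t. s \<in> ball 0 \<rho>" by (rule eventually_at_in_open') (use t in auto)
  thus "\<forall>\<^sub>F s in at t. vd n (X s) (X t) \<le> 2 * K * (\<Sum>k<n. cmod (G k s (X t k) - G k t (X t k)))"
    by eventually_elim (use X_cont_bound tt in auto)
  have "((\<lambda>s. 2 * K * (\<Sum>k<n. cmod (G k s (X t k) - G k t (X t k)))) \<longlongrightarrow>
        2 * K * (\<Sum>k<n. cmod (G k t (X t k) - G k t (X t k)))) (at t)"
  proof (intro tendsto_intros)
    fix k assume k: "k \<in> {..<n}"
    show "((\<lambda>s. G k s (X t k)) \<longlongrightarrow> G k t (X t k)) (at t)"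
      using G_cont_t[OF W_bound(2)[OF _ tt dom_comp[OF X_prop(1)[OF tt]]]] k
      by (simp add: isCont_def)
  qed
  thus "((\<lambda>s. 2 * K * (\<Sum>k<n. cmod (G k s (X t k) - G k t (X t k)))) \<longlongrightarrow> 0) (at t)" by simp
qed simp

lemma beta_sum:
  assumes "\<And>k. k < n \<Longrightarrow> cmod (b k) \<le> 2 * \<rho> * E"
  shows "K * (\<Sum>k<n. cmod (b k * z k)) \<le> 1/4 * (\<Sum>k<n. cmod (z k))"
proof -
  have "K * (\<Sum>k<n. cmod (b k * z k)) \<le> K * (\<Sum>k<n. 2 * \<rho> * E * cmod (z k))"
    using K_ge1 assms by (intro mult_left_mono sum_mono) (auto simp: norm_mult mult_right_mono)
  also have "\<dots> = (2 * K * \<rho> * E) * (\<Sum>k<n. cmod (z k))" by (simp add: sum_distrib_left algebra_simps)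
  also have "\<dots> \<le> 1/4 * (\<Sum>k<n. cmod (z k))" using rho_facts(3) by (intro mult_right_mono) (auto simp: sum_nonneg)
  finally show ?thesis .
qed

end


context gsetup begin

lemma first_bracket:
  assumes k: "k < n" and s: "cmod s \<le> \<rho>" and t: "cmod t \<le> \<rho>"
    and y: "dist (x0 k) y \<le> 1" and y': "dist (x0 k) y' \<le> 1"
    and ep: "0 < ep" and close: "cmod (y' - y) \<le> ep / (8 * E)"
    and sd: "cmod (s ^ d k - t ^ d k) \<le> ep / (8 * E)"
  shows "cmod ((G k s y' - DG k t y * y') - (G k s y - DG k t y * y)) \<le> ep * cmod (y' - y)"
proof (rule field_differentiable_bound[where S = "closed_segment y y'" and f = "\<lambda>\<eta>. G k s \<eta> - DG k t y * \<eta>"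
        and f' = "\<lambda>\<eta>. DG k s \<eta> - DG k t y"])
  show "convex (closed_segment y y')" by simp
  have Ep: "E > 0" using E_ge1 by simp
  fix \<eta> assume eta: "\<eta> \<in> closed_segment y y'"
  have "closed_segment y y' \<subseteq> cball (x0 k) 1"
    by (rule closed_segment_subset) (use y y' in auto)
  hence eta_dom: "dist (x0 k) \<eta> \<le> 1" using eta by auto
  have Ws: "cmod (s ^ d k * exp \<eta>) \<le> 1/2" by (rule W_bound(2)[OF k s eta_dom])
  have Wt: "cmod (t ^ d k * exp y) \<le> 1/2" by (rule W_bound(2)[OF k t y])
  show "((\<lambda>\<eta>. G k s \<eta> - DG k t y * \<eta>) has_field_derivative DG k s \<eta> - DG k t y) (at \<eta> within closed_segment y y')"
    using G_deriv_y[OF Ws] by (auto intro!: derivative_eq_intros)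
  have de: "cmod (\<eta> - y) \<le> cmod (y' - y)"
    using dist_in_closed_segment[OF eta] by (simp add: dist_norm norm_minus_commute)
  have "cmod (s ^ d k * exp \<eta> - t ^ d k * exp y) = cmod ((s ^ d k - t ^ d k) * exp \<eta> + t ^ d k * (exp \<eta> - exp y))"
    by (simp add: algebra_simps)
  also have "\<dots> \<le> cmod (s ^ d k - t ^ d k) * cmod (exp \<eta>) + cmod (t ^ d k) * cmod (exp \<eta> - exp y)"
    by (metis norm_mult norm_triangle_ineq)
  also have "\<dots> \<le> ep / (8 * E) * E + 1 * (E * cmod (\<eta> - y))"
  proof (intro add_mono mult_mono)
    show "cmod (exp \<eta>) \<le> E" using exp_bound[OF eta_dom] x0_bound[OF k] by linarith
    show "cmod (t ^ d k) \<le> 1" using tpow_bound[OF k t] rho_facts(4) by linarith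
    show "cmod (exp \<eta> - exp y) \<le> E * cmod (\<eta> - y)"
      using exp_lip[OF eta_dom y] x0_bound[OF k] by (meson mult_right_mono norm_ge_zero order_trans)
  qed (use sd ep Ep in auto)
  also have "\<dots> \<le> ep / 8 + E * (ep / (8 * E))"
  proof -
    have "E * cmod (\<eta> - y) \<le> E * (ep / (8 * E))" using de close Ep by (intro mult_left_mono) auto
    moreover have "ep / (8 * E) * E = ep / 8" using Ep by simp
    ultimately show ?thesis by simp
  qed
  also have "\<dots> = ep / 4" using Ep by (simp add: field_simps)
  finally have Wd: "cmod (s ^ d k * exp \<eta> - t ^ d k * exp y) \<le> ep / 4" .
  have "cmod (DG k s \<eta> - DG k t y) \<le> 4 * cmod (s ^ d k * exp \<eta> - t ^ d k * exp y)"
    unfolding DG_def by (rule phi_lip[OF Ws Wt])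
  thus "cmod (DG k s \<eta> - DG k t y) \<le> ep" using Wd by linarith
qed auto

end


context gsetup begin

lemma key_step:
  fixes s t :: complex and ep :: real and \<alpha> v :: "nat \<Rightarrow> complex"
  assumes s: "cmod s \<le> \<rho>" and t: "cmod t \<le> \<rho>" and ep: "0 < ep" "K * ep \<le> 1/4"
   and close: "vd n (X s) (X t) \<le> ep / (8 * E)"
   and sd: "\<forall>k<n. cmod (s ^ d k - t ^ d k) \<le> ep / (8 * E)"
   and der: "\<forall>k<n. cmod (G k s (X t k) - G k t (X t k) - \<alpha> k * (s - t)) \<le> ep * cmod (s - t)"
   and vfix: "\<forall>i<n. v i = - (\<Sum>k<n. M i k * \<alpha> k) - (\<Sum>k<n. M i k * (DG k t (X t k) * v k))"
  shows "vd n (X s) (\<lambda>i. X t i + v i * (s - t)) \<le> 2 * K * ep * (vd n v (\<lambda>_. 0) + n) * cmod (s - t)"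
proof -
  define h where "h = s - t"
  define \<beta> where "\<beta> k = DG k t (X t k)" for k
  define \<delta> where "\<delta> k = X s k - X t k" for k
  define e where "e k = G k s (X s k) - G k t (X t k) - \<alpha> k * h - \<beta> k * \<delta> k" for k
  define D where "D = vd n (X s) (\<lambda>i. X t i + v i * h)"
  define V where "V = vd n v (\<lambda>_. 0)"
  have xs: "dist (x0 k) (X s k) \<le> 1" and xt: "dist (x0 k) (X t k) \<le> 1" if "k < n" for k
    using dom_comp[OF X_prop(1)[OF s] that] dom_comp[OF X_prop(1)[OF t] that] by auto
  have e_bound: "cmod (e k) \<le> ep * cmod (\<delta> k) + ep * cmod h" if k: "k < n" for k
  proof -
    have eq: "e k = ((G k s (X s k) - DG k t (X t k) * X s k) - (G k s (X t k) - DG k t (X t k) * X t k))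
               + (G k s (X t k) - G k t (X t k) - \<alpha> k * h)"
      unfolding e_def \<beta>_def \<delta>_def by (simp add: algebra_simps)
    have "cmod (X s k - X t k) \<le> vd n (X s) (X t)" by (rule vd_comp[OF k])
    hence cl: "cmod (X s k - X t k) \<le> ep / (8 * E)" using close by linarith
    have 1: "cmod ((G k s (X s k) - DG k t (X t k) * X s k) - (G k s (X t k) - DG k t (X t k) * X t k))
            \<le> ep * cmod (X s k - X t k)"
      by (rule first_bracket[OF k s t xt[OF k] xs[OF k] ep(1) cl sd[rule_format, OF k]])
    have 2: "cmod (G k s (X t k) - G k t (X t k) - \<alpha> k * h) \<le> ep * cmod h"
      using der k unfolding h_def by blast
    have "cmod (e k) \<le> cmod ((G k s (X s k) - DG k t (X t k) * X s k) - (G k s (X t k) - DG k t (X t k) * X t k))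
               + cmod (G k s (X t k) - G k t (X t k) - \<alpha> k * h)"
      unfolding eq by (rule norm_triangle_ineq)
    thus ?thesis using 1 2 unfolding \<delta>_def by linarith
  qed
  have rep: "X s i - (X t i + v i * h) = - (\<Sum>k<n. M i k * (\<beta> k * (\<delta> k - v k * h) + e k))"
    if i: "i < n" for i
  proof -
    have "(\<Sum>k<n. M i k * (\<beta> k * (\<delta> k - v k * h) + e k))
        = (\<Sum>k<n. M i k * G k s (X s k) - M i k * G k t (X t k) - h * (M i k * \<alpha> k) - h * (M i k * (\<beta> k * v k)))"
      unfolding e_def by (intro sum.cong refl) (simp add: algebra_simps)
    also have "\<dots> = (\<Sum>k<n. M i k * G k s (X s k)) - (\<Sum>k<n. M i k * G k t (X t k))
                  - h * ((\<Sum>k<n. M i k * \<alpha> k) + (\<Sum>k<n. M i k * (\<beta> k * v k)))"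
      by (simp add: sum_subtractf sum_distrib_left algebra_simps sum.distrib)
    also have "(\<Sum>k<n. M i k * \<alpha> k) + (\<Sum>k<n. M i k * (\<beta> k * v k)) = - v i"
      unfolding \<beta>_def by (subst vfix[rule_format, OF i]) simp
    finally have f1: "(\<Sum>k<n. M i k * (\<beta> k * (\<delta> k - v k * h) + e k))
        = (\<Sum>k<n. M i k * G k s (X s k)) - (\<Sum>k<n. M i k * G k t (X t k)) + h * v i" by simp
    have f2: "X s i = x0 i - (\<Sum>k<n. M i k * G k s (X s k))" by (rule X_eq[OF s i])
    have f3: "X t i = x0 i - (\<Sum>k<n. M i k * G k t (X t k))" by (rule X_eq[OF t i])
    show ?thesis unfolding f1 by (subst f2, subst f3) (simp add: algebra_simps)
  qed
  have bnd\<beta>: "cmod (\<beta> k) \<le> 2 * \<rho> * E" if k: "k < n" for k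
  proof -
    have W: "cmod (t ^ d k * exp (X t k)) \<le> 1/2" "cmod (t ^ d k * exp (X t k)) \<le> \<rho> * E"
      using W_bound[OF k t xt[OF k]] by auto
    show ?thesis unfolding \<beta>_def DG_def using phi_bound[OF W(1)] W(2) by linarith
  qed
  have "D = (\<Sum>i<n. cmod (\<Sum>k<n. M i k * (\<beta> k * (\<delta> k - v k * h) + e k)))"
    unfolding D_def vd_def by (intro sum.cong refl) (simp add: rep)
  also have "\<dots> \<le> K * (\<Sum>k<n. cmod (\<beta> k * (\<delta> k - v k * h) + e k))"
    unfolding K_def by (rule mat_bound)
  also have "\<dots> \<le> K * (\<Sum>k<n. cmod (\<beta> k * (\<delta> k - v k * h))) + K * (\<Sum>k<n. cmod (e k))"
    unfolding distrib_left[symmetric] sum.distrib[symmetric]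
    using K_ge1 by (intro mult_left_mono sum_mono norm_triangle_ineq) auto
  also have "K * (\<Sum>k<n. cmod (\<beta> k * (\<delta> k - v k * h))) \<le> 1/4 * (\<Sum>k<n. cmod (\<delta> k - v k * h))"
    by (rule beta_sum[OF bnd\<beta>])
  also have "(\<Sum>k<n. cmod (\<delta> k - v k * h)) = D"
    unfolding D_def vd_def \<delta>_def by (intro sum.cong refl) (simp add: algebra_simps)
  also have "K * (\<Sum>k<n. cmod (e k)) \<le> K * (\<Sum>k<n. ep * cmod (\<delta> k) + ep * cmod h)"
    using K_ge1 e_bound by (intro mult_left_mono sum_mono) auto
  also have "(\<Sum>k<n. ep * cmod (\<delta> k) + ep * cmod h) = ep * (\<Sum>k<n. cmod (\<delta> k)) + ep * n * cmod h"
    by (simp add: sum.distrib sum_distrib_left)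
  finally have A: "D \<le> 1/4 * D + K * (ep * (\<Sum>k<n. cmod (\<delta> k)) + ep * n * cmod h)" by simp
  have Sd: "(\<Sum>k<n. cmod (\<delta> k)) \<le> D + V * cmod h"
  proof -
    have "(\<Sum>k<n. cmod (\<delta> k)) \<le> (\<Sum>k<n. cmod (\<delta> k - v k * h) + cmod (v k) * cmod h)"
      by (intro sum_mono) (metis diff_add_cancel norm_mult norm_triangle_ineq)
    also have "\<dots> = D + V * cmod h"
      using \<open>(\<Sum>k<n. cmod (\<delta> k - v k * h)) = D\<close>
      by (simp add: sum.distrib V_def vd_def sum_distrib_right)
    finally show ?thesis .
  qed
  have B: "K * (ep * (\<Sum>k<n. cmod (\<delta> k))) \<le> (K * ep) * D + (K * ep) * V * cmod h"
  proof -
    have "K * (ep * (\<Sum>k<n. cmod (\<delta> k))) \<le> K * (ep * (D + V * cmod h))"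
      using K_ge1 ep Sd by (intro mult_left_mono) auto
    thus ?thesis by (simp add: algebra_simps)
  qed
  have C: "(K * ep) * D \<le> 1/4 * D"
    using ep(2) vd_ge0 unfolding D_def by (intro mult_right_mono) auto
  have A2: "D \<le> 1/4 * D + (1/4 * D + (K * ep) * V * cmod h) + (K * ep) * n * cmod h"
    using A B C by (simp add: algebra_simps)
  have lin: "D' \<le> 2 * (P + Q)" if "D' \<le> 1/4 * D' + (1/4 * D' + P) + Q" for D' P Q :: real using that by argo
  have "D \<le> 2 * ((K * ep) * V * cmod h + (K * ep) * n * cmod h)" by (rule lin[OF A2])
  also have "\<dots> = 2 * K * ep * (V + n) * cmod h" by (simp add: algebra_simps)
  finally show ?thesis unfolding D_def V_def h_def .
qed

end


context gsetup begin

lemma beta_bnd: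
  assumes k: "k < n" and t: "cmod t \<le> \<rho>" and y: "dist (x0 k) y \<le> 1"
  shows "cmod (DG k t y) \<le> 2 * \<rho> * E"
proof -
  have W: "cmod (t ^ d k * exp y) \<le> 1/2" "cmod (t ^ d k * exp y) \<le> \<rho> * E"
    using W_bound[OF k t y] by auto
  show ?thesis unfolding DG_def using phi_bound[OF W(1)] W(2) by linarith
qed

lemma ep_arith:
  fixes K e C :: real assumes K: "K \<ge> 1" and e: "e > 0" and C: "C \<ge> 0"
  shows "min (1/(4*K)) (e / (4*K*(C+1))) > 0" "K * min (1/(4*K)) (e / (4*K*(C+1))) \<le> 1/4"
    "2 * K * min (1/(4*K)) (e / (4*K*(C+1))) * C < e"
proof -
  define ep where "ep = min (1/(4*K)) (e / (4*K*(C+1)))"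
  show "min (1/(4*K)) (e / (4*K*(C+1))) > 0" using K e C by (simp add: add_pos_nonneg)
  have "K * ep \<le> K * (1/(4*K))" unfolding ep_def using K by (intro mult_left_mono) auto
  thus "K * min (1/(4*K)) (e / (4*K*(C+1))) \<le> 1/4" using K unfolding ep_def by simp
  define x where "x = e / (4*K*(C+1))"
  have x0: "x \<ge> 0" unfolding x_def using K e C by simp
  have "x * (4*K*(C+1)) = e" unfolding x_def using K C by simp
  hence xe: "x * (2*K*(C+1)) = e / 2" by (simp add: algebra_simps)
  have "2 * K * ep * C \<le> 2 * K * x * C"
    unfolding ep_def x_def using K C by (intro mult_right_mono mult_left_mono) auto
  also have "\<dots> = x * (2*K*C)" by (simp add: algebra_simps)
  also have "\<dots> \<le> x * (2*K*(C+1))" using x0 K by (intro mult_left_mono) auto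
  also have "\<dots> < e" using xe e by simp
  finally show "2 * K * min (1/(4*K)) (e / (4*K*(C+1))) * C < e" unfolding ep_def .
qed

lemma X_deriv:
  assumes t: "cmod t < \<rho>"
  shows "\<exists>v. \<forall>i<n. ((\<lambda>s. X s i) has_field_derivative v i) (at t)"
proof -
  have tt: "cmod t \<le> \<rho>" using t by simp
  have xt: "dist (x0 k) (X t k) \<le> 1" if "k < n" for k
    using dom_comp[OF X_prop(1)[OF tt] that] .
  define \<alpha> where "\<alpha> k = deriv (\<lambda>s. G k s (X t k)) t" for k
  have D\<alpha>: "((\<lambda>s. G k s (X t k)) has_field_derivative \<alpha> k) (at t)" if k: "k < n" for k
    unfolding \<alpha>_def DERIV_deriv_iff_field_differentiable
    by (rule G_diff_t[OF W_bound(2)[OF k tt xt[OF k]]])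
  define \<beta> where "\<beta> k = DG k t (X t k)" for k
  have b\<beta>: "cmod (\<beta> k) \<le> 2 * \<rho> * E" if "k < n" for k
    unfolding \<beta>_def by (rule beta_bnd[OF that tt xt[OF that]])
  define a where "a i = - (\<Sum>k<n. M i k * \<alpha> k)" for i
  define Vm where "Vm w = (\<lambda>i. a i - (\<Sum>k<n. M i k * (\<beta> k * w k)))" for w
  have "\<exists>v. vd n v (\<lambda>_. 0) \<le> 2 * vd n a (\<lambda>_. 0) \<and> (\<forall>i<n. Vm v i = v i)"
  proof (rule contraction_fix[where q = "1/4"])
    fix w assume w: "vd n w (\<lambda>_. 0) \<le> 2 * vd n a (\<lambda>_. 0)"
    have "vd n (Vm w) (\<lambda>_. 0) \<le> (\<Sum>i<n. cmod (a i) + cmod (\<Sum>k<n. M i k * (\<beta> k * w k)))"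
      unfolding vd_def Vm_def by (intro sum_mono) (simp add: norm_triangle_ineq4)
    also have "\<dots> = vd n a (\<lambda>_. 0) + (\<Sum>i<n. cmod (\<Sum>k<n. M i k * (\<beta> k * w k)))"
      by (simp add: sum.distrib vd_def)
    finally have 1: "vd n (Vm w) (\<lambda>_. 0) \<le> vd n a (\<lambda>_. 0) + (\<Sum>i<n. cmod (\<Sum>k<n. M i k * (\<beta> k * w k)))" .
    have 2: "(\<Sum>i<n. cmod (\<Sum>k<n. M i k * (\<beta> k * w k))) \<le> K * (\<Sum>k<n. cmod (\<beta> k * w k))"
      unfolding K_def by (rule mat_bound)
    have 3: "K * (\<Sum>k<n. cmod (\<beta> k * w k)) \<le> 1/4 * (\<Sum>k<n. cmod (w k))" by (rule beta_sum[OF b\<beta>])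
    have 4: "(\<Sum>k<n. cmod (w k)) = vd n w (\<lambda>_. 0)" by (simp add: vd_def)
    show "vd n (Vm w) (\<lambda>_. 0) \<le> 2 * vd n a (\<lambda>_. 0)" using 1 2 3 4 w vd_ge0[of n a "\<lambda>_. 0"] by linarith
  next
    fix w w'
    have "vd n (Vm w) (Vm w') = (\<Sum>i<n. cmod (\<Sum>k<n. M i k * (\<beta> k * (w' k - w k))))"
      unfolding vd_def Vm_def by (intro sum.cong refl) (simp add: sum_subtractf algebra_simps)
    also have "\<dots> \<le> K * (\<Sum>k<n. cmod (\<beta> k * (w' k - w k)))" unfolding K_def by (rule mat_bound)
    also have "\<dots> \<le> 1/4 * (\<Sum>k<n. cmod (w' k - w k))" by (rule beta_sum[OF b\<beta>])
    also have "(\<Sum>k<n. cmod (w' k - w k)) = vd n w w'" unfolding vd_def by (simp add: norm_minus_commute)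
    finally show "vd n (Vm w) (Vm w') \<le> 1/4 * vd n w w'" .
  qed (auto simp: vd_ge0)
  then obtain v where vfix0: "\<forall>i<n. Vm v i = v i" by blast
  have vfix: "\<forall>i<n. v i = - (\<Sum>k<n. M i k * \<alpha> k) - (\<Sum>k<n. M i k * (DG k t (X t k) * v k))"
    using vfix0 unfolding Vm_def a_def \<beta>_def by auto
  show ?thesis
  proof (intro exI allI impI)
    fix i assume i: "i < n"
    show "((\<lambda>s. X s i) has_field_derivative v i) (at t)"
      unfolding has_field_derivative_iff tendsto_iff
    proof (intro allI impI)
      fix e :: real assume e: "e > 0"
      define C where "C = vd n v (\<lambda>_. 0) + n"
      have C0: "C \<ge> 0" unfolding C_def using vd_ge0[of n v] by simp
      define ep where "ep = min (1/(4*K)) (e / (4*K*(C+1)))"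
      have ep: "ep > 0" "K * ep \<le> 1/4" "2 * K * ep * C < e"
        using ep_arith[OF K_ge1 e C0] unfolding ep_def by auto
      have Ep: "E > 0" using E_ge1 by simp
      have ev1: "\<forall>\<^sub>F s in at t. s \<in> ball 0 \<rho> - {t}"
        by (rule eventually_at_in_open) (use t in auto)
      have ev2: "\<forall>\<^sub>F s in at t. vd n (X s) (X t) < ep / (8 * E)"
        using order_tendstoD(2)[OF X_cont[OF t]] ep Ep by simp
      have ev3: "\<forall>\<^sub>F s in at t. \<forall>k\<in>{..<n}.
          dist ((G k s (X t k) - G k t (X t k)) / (s - t)) (\<alpha> k) < ep"
      proof (rule eventually_ball_finite)
        show "\<forall>k\<in>{..<n}. \<forall>\<^sub>F s in at t. dist ((G k s (X t k) - G k t (X t k)) / (s - t)) (\<alpha> k) < ep"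
          using D\<alpha> ep(1) unfolding has_field_derivative_iff tendsto_iff by auto
      qed simp
      have ev4: "\<forall>\<^sub>F s in at t. \<forall>k\<in>{..<n}. dist (s ^ d k) (t ^ d k) < ep / (8 * E)"
      proof (rule eventually_ball_finite)
        have "((\<lambda>s. s ^ d k) \<longlongrightarrow> t ^ d k) (at t)" for k by (intro tendsto_intros)
        thus "\<forall>k\<in>{..<n}. \<forall>\<^sub>F s in at t. dist (s ^ d k) (t ^ d k) < ep / (8 * E)"
          using ep(1) Ep unfolding tendsto_iff by auto
      qed simp
      show "\<forall>\<^sub>F s in at t. dist ((X s i - X t i) / (s - t)) (v i) < e"
        using ev1 ev2 ev3 ev4
      proof eventually_elim
        case (elim s)
        have sne: "s \<noteq> t" and ss: "cmod s \<le> \<rho>" using elim(1) by auto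
        have hpos: "cmod (s - t) > 0" using sne by simp
        have der: "\<forall>k<n. cmod (G k s (X t k) - G k t (X t k) - \<alpha> k * (s - t)) \<le> ep * cmod (s - t)"
        proof (intro allI impI)
          fix k assume k: "k < n"
          have "G k s (X t k) - G k t (X t k) - \<alpha> k * (s - t)
              = ((G k s (X t k) - G k t (X t k)) / (s - t) - \<alpha> k) * (s - t)"
            using sne by (simp add: field_simps)
          hence "cmod (G k s (X t k) - G k t (X t k) - \<alpha> k * (s - t))
              = dist ((G k s (X t k) - G k t (X t k)) / (s - t)) (\<alpha> k) * cmod (s - t)"
            by (simp add: dist_norm norm_mult)
          also have "\<dots> \<le> ep * cmod (s - t)"
            using elim(3) k by (intro mult_right_mono) (auto intro: less_imp_le)
          finally show "cmod (G k s (X t k) - G k t (X t k) - \<alpha> k * (s - t)) \<le> ep * cmod (s - t)" .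
        qed
        have sd: "\<forall>k<n. cmod (s ^ d k - t ^ d k) \<le> ep / (8 * E)"
          using elim(4) by (auto simp: dist_norm intro: less_imp_le)
        have ks: "vd n (X s) (\<lambda>i. X t i + v i * (s - t)) \<le> 2 * K * ep * C * cmod (s - t)"
          using key_step[OF ss tt ep(1) ep(2) less_imp_le[OF elim(2)] sd der vfix] unfolding C_def .
        have "cmod (X s i - X t i - v i * (s - t)) \<le> vd n (X s) (\<lambda>i. X t i + v i * (s - t))"
          using vd_comp[OF i, of "X s" "\<lambda>i. X t i + v i * (s - t)"] by (simp add: algebra_simps)
        also have "\<dots> \<le> 2 * K * ep * C * cmod (s - t)" by (rule ks)
        also have "\<dots> < e * cmod (s - t)" using ep(3) hpos by (intro mult_strict_right_mono) auto
        finally have lt: "cmod (X s i - X t i - v i * (s - t)) < e * cmod (s - t)" .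
        have "(X s i - X t i) / (s - t) - v i = (X s i - X t i - v i * (s - t)) / (s - t)"
          using sne by (simp add: field_simps)
        hence "dist ((X s i - X t i) / (s - t)) (v i) = cmod (X s i - X t i - v i * (s - t)) / cmod (s - t)"
          by (simp add: dist_norm norm_divide)
        also have "\<dots> < e" using lt hpos by (simp add: divide_less_eq)
        finally show ?case .
      qed
    qed
  qed
qed

lemma X_holo: "i < n \<Longrightarrow> (\<lambda>s. X s i) holomorphic_on ball 0 \<rho>"
  unfolding holomorphic_on_open[OF open_ball] using X_deriv by fastforce

end


lemma lattice_eq:
  fixes z L Gm :: "nat \<Rightarrow> complex"
  assumes zL: "\<forall>i<n. z i = exp (L i)" and zG: "\<forall>i<n. 1 - z i = exp (Gm i)"
    and eq: "\<forall>j<r. (\<Sum>i<n. of_int (A j i) * L i) + (\<Sum>i<n. of_int (B j i) * Gm i) = of_real pi * \<i> * of_int (c j)"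
    and mem: "(a, b, g) \<in> lattice_of n r A B c"
  shows "(\<Prod>i<n. z i powi a i * (1 - z i) powi b i) = (-1) powi g"
proof -
  obtain k where ka: "\<forall>i. a i = (if i < n then (\<Sum>j<r. k j * A j i) else 0)"
    and kb: "\<forall>i. b i = (if i < n then (\<Sum>j<r. k j * B j i) else 0)" and kg: "g = (\<Sum>j<r. k j * c j)"
    using mem unfolding lattice_of_def by blast
  have "(\<Prod>i<n. z i powi a i * (1 - z i) powi b i) = (\<Prod>i<n. exp (of_int (a i) * L i + of_int (b i) * Gm i))"
    using zL zG by (intro prod.cong refl) (simp add: exp_power_int exp_add)
  also have "\<dots> = exp (\<Sum>i<n. of_int (a i) * L i + of_int (b i) * Gm i)" by (rule exp_sum[symmetric]) simp
  also have "(\<Sum>i<n. of_int (a i) * L i + of_int (b i) * Gm i)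
      = (\<Sum>i<n. \<Sum>j<r. of_int (k j) * (of_int (A j i) * L i + of_int (B j i) * Gm i))"
  proof (intro sum.cong refl)
    fix i assume "i \<in> {..<n}"
    hence "a i = (\<Sum>j<r. k j * A j i)" "b i = (\<Sum>j<r. k j * B j i)" using ka kb by auto
    thus "of_int (a i) * L i + of_int (b i) * Gm i
        = (\<Sum>j<r. of_int (k j) * (of_int (A j i) * L i + of_int (B j i) * Gm i))"
      by (simp add: sum_distrib_right sum_distrib_left sum.distrib algebra_simps)
  qed
  also have "\<dots> = (\<Sum>j<r. of_int (k j) * ((\<Sum>i<n. of_int (A j i) * L i) + (\<Sum>i<n. of_int (B j i) * Gm i)))"
    by (subst sum.swap) (simp add: sum_distrib_left sum.distrib distrib_left)
  also have "\<dots> = (\<Sum>j<r. of_int (k j) * (of_real pi * \<i> * of_int (c j)))" using eq by simp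
  also have "\<dots> = of_int g * (of_real pi * \<i>)" unfolding kg by (simp add: sum_distrib_right sum_distrib_left algebra_simps)
  finally show ?thesis by (simp add: exp_power_int[symmetric])
qed

lemma Vvar_sub: "z \<in> Vvar n \<Lambda> \<Longrightarrow> z \<in> Vclosure n \<Lambda>"
  unfolding Vclosure_def
proof (intro CollectI conjI allI impI)
  assume z: "z \<in> Vvar n \<Lambda>"
  hence zc: "z \<in> Cstarbullet_pts n" unfolding Vvar_def by auto
  show "\<And>i. i < n \<Longrightarrow> z i \<noteq> 1" "\<And>i. n \<le> i \<Longrightarrow> z i = 0" using zc unfolding Cstarbullet_pts_def by auto
  show "\<And>e. e > 0 \<Longrightarrow> \<exists>z'\<in>Vvar n \<Lambda>. \<forall>i<n. norm (z' i - z i) < e" using z by force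
qed

context gsetup begin

lemma W_small:
  assumes k: "k < n" and t: "cmod t \<le> \<rho>" and y: "dist (x0 k) y \<le> 1"
  shows "cmod (t ^ d k * exp y) \<le> cmod t * E"
proof -
  have "cmod t ^ d k \<le> cmod t ^ 1"
    using t rho_facts(4) d_pos[OF k] by (intro power_decreasing) auto
  hence tp: "cmod (t ^ d k) \<le> cmod t" by (simp add: norm_power)
  have ey: "cmod (exp y) \<le> E" using exp_bound[OF y] x0_bound[OF k] by linarith
  show ?thesis unfolding norm_mult using tp ey by (intro mult_mono) auto
qed

end


theorem mainTheorem6:
  fixes n r :: nat and A B :: "nat \<Rightarrow> nat \<Rightarrow> int" and c d :: "nat \<Rightarrow> int"
  assumes "r \<le> n - 1"
    and "rows_independent n r A B c"
    and "degeneration_vector n r A d"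
    and "\<forall>i<n. d i > 0"
    and "int_mat_rank r n A = n - 1"
  shows "genuine n (lattice_of n r A B c) d"
proof -
  note dpos = assms(4)
  have n1: "n \<ge> 1" using assms(3) unfolding degeneration_vector_def by auto
  have Ad: "\<forall>j<r. (\<Sum>i<n. A j i * d i) = 0" using assms(3) unfolding degeneration_vector_def by auto
  have rk: "int_mat_rank r n A \<ge> r" using assms(1,5) by simp
  have "\<forall>j. \<exists>y. j < r \<longrightarrow> (\<forall>j'<r. (\<Sum>i<n. rat_of_int (A j' i) * y i) = (if j' = j then 1 else 0))"
    using right_inverse_exists[OF rk] by blast
  then obtain Y where Y: "\<And>j j'. j < r \<Longrightarrow> j' < r \<Longrightarrow> (\<Sum>i<n. rat_of_int (A j' i) * Y j i) = (if j' = j then 1 else 0)"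
    by metis
  define R where "R i j = (of_rat (Y j i) :: complex)" for i j
  have AR1: "(\<Sum>i<n. of_int (A j' i) * R i j) = (if j' = j then 1 else 0)" if "j < r" "j' < r" for j j'
  proof -
    have "(\<Sum>i<n. of_int (A j' i) * R i j) = of_rat (\<Sum>i<n. rat_of_int (A j' i) * Y j i)"
      unfolding R_def by (simp add: of_rat_sum of_rat_mult)
    thus ?thesis using Y[OF that] by simp
  qed
  have AR: "(\<Sum>i<n. of_int (A j' i) * (\<Sum>j<r. R i j * z j)) = z j'" if j': "j' < r" for j' z
  proof -
    have "(\<Sum>i<n. of_int (A j' i) * (\<Sum>j<r. R i j * z j)) = (\<Sum>j<r. z j * (\<Sum>i<n. of_int (A j' i) * R i j))"
      by (simp add: sum_distrib_left sum_distrib_right algebra_simps) (rule sum.swap)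
    also have "\<dots> = (\<Sum>j<r. if j = j' then z j else 0)"
      using AR1 j' by (intro sum.cong refl) auto
    also have "\<dots> = z j'" using j' by simp
    finally show ?thesis .
  qed
  define dn where "dn k = nat (d k)" for k
  define w where "w j = of_real pi * \<i> * (of_int (c j) :: complex)" for j
  define x0 where "x0 i = (\<Sum>j<r. R i j * w j)" for i
  define M where "M i k = (\<Sum>j<r. R i j * of_int (B j k))" for i k
  interpret gs: gsetup n M x0 dn
    by unfold_locales (use dpos in \<open>auto simp: dn_def\<close>)
  have eqX: "(\<Sum>i<n. of_int (A j' i) * gs.X s i) + (\<Sum>i<n. of_int (B j' i) * gs.G i s (gs.X s i)) = w j'"
    if s: "cmod s \<le> gs.\<rho>" and j': "j' < r" for s j'
  proof -
    define z where "z j = w j - (\<Sum>k<n. of_int (B j k) * gs.G k s (gs.X s k))" for j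
    have Xi: "gs.X s i = (\<Sum>j<r. R i j * z j)" if i: "i < n" for i
    proof -
      have "gs.X s i = x0 i - (\<Sum>k<n. M i k * gs.G k s (gs.X s k))" by (rule gs.X_eq[OF s i])
      also have "(\<Sum>k<n. M i k * gs.G k s (gs.X s k)) = (\<Sum>k<n. \<Sum>j<r. R i j * (of_int (B j k) * gs.G k s (gs.X s k)))"
        unfolding M_def by (simp add: sum_distrib_right mult.assoc)
      also have "\<dots> = (\<Sum>j<r. \<Sum>k<n. R i j * (of_int (B j k) * gs.G k s (gs.X s k)))" by (rule sum.swap)
      also have "\<dots> = (\<Sum>j<r. R i j * (\<Sum>k<n. of_int (B j k) * gs.G k s (gs.X s k)))"
        by (simp add: sum_distrib_left)
      finally show ?thesis unfolding x0_def z_def by (simp add: sum_subtractf right_diff_distrib)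
    qed
    have "(\<Sum>i<n. of_int (A j' i) * gs.X s i) = (\<Sum>i<n. of_int (A j' i) * (\<Sum>j<r. R i j * z j))"
      using Xi by (intro sum.cong refl) auto
    also have "\<dots> = z j'" by (rule AR[OF j'])
    finally show ?thesis unfolding z_def by simp
  qed
  define \<rho>' where "\<rho>' = gs.\<rho> / 2"
  have rp: "\<rho>' > 0" "\<rho>' < gs.\<rho>" "\<rho>' \<le> 1" using gs.rho_pos gs.rho_facts(4) unfolding \<rho>'_def by auto
  define u where "u i t = of_real \<rho>' ^ dn i * exp (gs.X (of_real \<rho>' * t) i)" for i t
  define f where "f i t = t ^ nat (d i) * u i t" for i t
  define Z where "Z t = (\<lambda>i. if i < n then f i t else (0::complex))" for t
  define p where "p = (\<lambda>i::nat. 0::complex)"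
  have fZ: "f i t = (of_real \<rho>' * t) ^ dn i * exp (gs.X (of_real \<rho>' * t) i)" for i t
    unfolding f_def u_def dn_def by (simp add: power_mult_distrib)
  have sb: "cmod (of_real \<rho>' * t) < gs.\<rho>" if "t \<in> ball 0 1" for t
  proof -
    have "cmod (of_real \<rho>' * t) = \<rho>' * cmod t" using rp by (simp add: norm_mult)
    also have "\<dots> \<le> \<rho>' * 1" using that rp by (intro mult_left_mono) auto
    finally show ?thesis using rp by simp
  qed
  have ZV: "Z t \<in> Vvar n (lattice_of n r A B c)" if t: "t \<in> ball 0 1" "t \<noteq> 0" for t
  proof -
    define s where "s = of_real \<rho>' * t"
    have s0: "s \<noteq> 0" using t rp by (simp add: s_def)
    have ss: "cmod s \<le> gs.\<rho>" using sb[OF t(1)] by (simp add: s_def)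
    have dom: "dist (x0 i) (gs.X s i) \<le> 1" if "i < n" for i
      using gs.dom_comp[OF gs.X_prop(1)[OF ss] that] .
    have zi: "Z t i = s ^ dn i * exp (gs.X s i)" if "i < n" for i
      using that by (simp add: Z_def fZ s_def)
    have zh: "cmod (Z t i) \<le> 1/2" if i: "i < n" for i
      using gs.W_bound(2)[OF i ss dom[OF i]] zi[OF i] by simp
    have Cs: "Z t \<in> Cstarbullet_pts n"
      unfolding Cstarbullet_pts_def
    proof (intro CollectI conjI allI impI)
      fix i assume i: "i < n"
      show "Z t i \<noteq> 0" using zi[OF i] s0 by simp
      show "Z t i \<noteq> 1" using zh[OF i] by auto
    next
      fix i assume "n \<le> i" thus "Z t i = 0" by (simp add: Z_def)
    qed
    define L where "L i = of_nat (dn i) * Ln s + gs.X s i" for i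
    define Gm where "Gm i = gs.G i s (gs.X s i)" for i
    have zL: "\<forall>i<n. Z t i = exp (L i)" using zi s0 by (simp add: L_def exp_add exp_of_nat_mult)
    have zG: "\<forall>i<n. 1 - Z t i = exp (Gm i)"
    proof (intro allI impI)
      fix i assume i: "i < n"
      have "1 - Z t i \<noteq> 0" using zh[OF i] by auto
      thus "1 - Z t i = exp (Gm i)" unfolding Gm_def gs.G_def using zi[OF i] by simp
    qed
    have eqL: "\<forall>j<r. (\<Sum>i<n. of_int (A j i) * L i) + (\<Sum>i<n. of_int (B j i) * Gm i) = of_real pi * \<i> * of_int (c j)"
    proof (intro allI impI)
      fix j assume j: "j < r"
      have "(\<Sum>i<n. of_int (A j i) * (of_nat (dn i) :: complex)) = (\<Sum>i<n. of_int (A j i * d i))"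
        unfolding dn_def using dpos by (intro sum.cong refl) (simp add: of_nat_nat less_imp_le)
      also have "\<dots> = of_int (\<Sum>i<n. A j i * d i)" by (simp only: of_int_sum)
      also have "\<dots> = 0" using Ad j by simp
      finally have ad: "(\<Sum>i<n. of_int (A j i) * (of_nat (dn i) :: complex)) = 0" .
      have "(\<Sum>i<n. of_int (A j i) * L i) = Ln s * (\<Sum>i<n. of_int (A j i) * of_nat (dn i)) + (\<Sum>i<n. of_int (A j i) * gs.X s i)"
        unfolding L_def by (simp add: sum.distrib sum_distrib_left algebra_simps)
      thus "(\<Sum>i<n. of_int (A j i) * L i) + (\<Sum>i<n. of_int (B j i) * Gm i) = of_real pi * \<i> * of_int (c j)"
        using eqX[OF ss j] ad unfolding Gm_def w_def by simp
    qed
    show ?thesis unfolding Vvar_def using Cs lattice_eq[OF zL zG eqL] by auto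
  qed
  have Ep: "gs.E > 0" using gs.E_ge1 by simp
  have pcl: "p \<in> Vclosure n (lattice_of n r A B c)"
    unfolding Vclosure_def
  proof (intro CollectI conjI allI impI)
    show "\<And>i. i < n \<Longrightarrow> p i \<noteq> 1" "\<And>i. n \<le> i \<Longrightarrow> p i = 0" by (auto simp: p_def)
    fix e :: real assume e: "e > 0"
    define \<tau> where "\<tau> = min (1/2) (e / (2 * gs.E))"
    have tau: "\<tau> > 0" "\<tau> \<le> 1/2" "\<tau> * gs.E \<le> e / 2"
    proof -
      show "\<tau> > 0" "\<tau> \<le> 1/2" unfolding \<tau>_def using e Ep by auto
      have "\<tau> * gs.E \<le> (e / (2 * gs.E)) * gs.E" unfolding \<tau>_def using Ep by (intro mult_right_mono) auto
      thus "\<tau> * gs.E \<le> e / 2" using Ep by simp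
    qed
    define t where "t = complex_of_real \<tau>"
    have tb: "t \<in> ball 0 1" "t \<noteq> 0" using tau unfolding t_def by auto
    show "\<exists>z\<in>Vvar n (lattice_of n r A B c). \<forall>i<n. norm (z i - p i) < e"
    proof (intro bexI[OF _ ZV[OF tb]] allI impI)
      fix i assume i: "i < n"
      define s where "s = of_real \<rho>' * t"
      have ss: "cmod s \<le> gs.\<rho>" using sb[OF tb(1)] by (simp add: s_def)
      have "Z t i = s ^ dn i * exp (gs.X s i)" using i by (simp add: Z_def fZ s_def)
      hence "cmod (Z t i) \<le> cmod s * gs.E"
        using gs.W_small[OF i ss gs.dom_comp[OF gs.X_prop(1)[OF ss] i]] by simp
      also have "cmod s = \<rho>' * \<tau>" unfolding s_def t_def using rp tau by (simp add: norm_mult)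
      also have "\<rho>' * \<tau> * gs.E \<le> 1 * \<tau> * gs.E" using rp tau Ep by (intro mult_right_mono) auto
      also have "\<dots> < e" using tau e by simp
      finally show "norm (Z t i - p i) < e" by (simp add: p_def)
    qed
  qed
  have pnV: "p \<notin> Vvar n (lattice_of n r A B c)"
    using n1 unfolding Vvar_def Cstarbullet_pts_def p_def by (auto intro!: exI[of _ 0])
  have Zeq: "(\<lambda>i. if i < n then f i t else 0) = Z t" for t by (simp add: Z_def)
  have f0: "f i 0 = 0" if "i < n" for i using dpos that unfolding f_def by simp
  have Z0: "Z 0 = p" unfolding Z_def p_def using f0 by auto
  have uh: "u i holomorphic_on ball 0 1" if i: "i < n" for i
  proof -
    have "((\<lambda>s. gs.X s i) \<circ> (\<lambda>t. of_real \<rho>' * t)) holomorphic_on ball 0 1"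
    proof (rule holomorphic_on_compose_gen[OF _ gs.X_holo[OF i]])
      show "(\<lambda>t::complex. of_real \<rho>' * t) holomorphic_on ball 0 1" by (intro holomorphic_intros)
      show "(\<lambda>t::complex. of_real \<rho>' * t) ` ball 0 1 \<subseteq> ball 0 gs.\<rho>" using sb by (auto simp: dist_norm)
    qed
    hence "(\<lambda>t. gs.X (of_real \<rho>' * t) i) holomorphic_on ball 0 1" by (simp add: o_def)
    thus ?thesis unfolding u_def by (intro holomorphic_intros)
  qed
  show ?thesis
    unfolding genuine_def
  proof (intro exI conjI ballI allI impI)
    show "ideal_point n (lattice_of n r A B c) p" unfolding ideal_point_def using pcl pnV by auto
    fix i assume i: "i < n"
    show "f i holomorphic_on ball 0 1" unfolding f_def using uh[OF i] by (intro holomorphic_intros)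
    show "f i 0 = p i" using f0[OF i] by (simp add: p_def)
    show "u i holomorphic_on ball 0 1" by (rule uh[OF i])
    show "u i 0 \<noteq> 0" unfolding u_def using rp by simp
    show "d i = 0 \<Longrightarrow> u i 0 \<noteq> 1" using dpos i by auto
  next
    fix t assume "t \<in> ball (0::complex) 1"
    thus "(\<lambda>i. if i < n then f i t else 0) \<in> Vclosure n (lattice_of n r A B c)"
      unfolding Zeq using pcl Z0 ZV Vvar_sub by (cases "t = 0") auto
  next
    fix t assume "t \<in> ball (0::complex) 1 - {0}"
    thus "(\<lambda>i. if i < n then f i t else 0) \<in> Vvar n (lattice_of n r A B c)"
      unfolding Zeq using ZV by auto
  next
    fix i t assume "i < n" "t \<in> ball (0::complex) 1"
    show "f i t = t ^ nat (d i) * u i t" by (simp add: f_def)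
  qed
qed

end
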